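(* Let $q$ be a prime power, $m\ge1$, $1\le k\le n$, $g_1,\dots,g_n\in\mathbb{F}_{q^m}$ linearly independent over $\mathbb{F}_q$, $\mathbf g=(g_1,\dots,g_n)$, $\mathbf r=(r_1,\dots,r_n)\in\mathbb{F}_{q^m}^n$. Then Algorithm 3 (described in the context) has computational complexity order $\mathcal{O}_{q^m}(n^2)$.
   Context: Write $[i]:=q^i$. A $q$-linearized polynomial is $f(x)=\sum_{i=0}^{d}a_ix^{[i]}$, $a_i\in\mathbb{F}_{q^m}$; if $a_d\ne0$, $d=\mathrm{qdeg}(f)$ ($\mathrm{qdeg}(0)=-\infty$). $\mathcal{L}_q(x,q^m)$ is the ring of these under addition and composition $\circ$. Composition of $2\times2$ matrices over $\mathcal{L}_q(x,q^m)$ is defined like matrix multiplication with products replaced by composition. Algorithm 3 (input $k,\mathbf g,\mathbf r$): $B_0=\begin{bmatrix}x&0\\0&x\end{bmatrix}$; writing $B_i=\begin{bmatrix}P_i&-K_i\\N_i&-D_i\end{bmatrix}$, for $i=1,\dots,n$: $\Gamma_i:=P_{i-1}(g_i)-K_{i-1}(r_i)$, $\Delta_i:=N_{i-1}(g_i)-D_{i-1}(r_i)$; if [$\mathrm{qdeg}(P_{i-1})\le\mathrm{qdeg}(D_{i-1})+k-1$ and $\Gamma_i\ne0$] or $\Delta_i=0$, then $B_i:=\begin{bmatrix}x^q-\Gamma_i^{q-1}x&0\\\Delta_ix&-\Gamma_ix\end{bmatrix}\circ B_{i-1}$; else $B_i:=\begin{bmatrix}\Delta_ix&-\Gamma_ix\\0&x^q-\Delta_i^{q-1}x\end{bmatrix}\circ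 B_{i-1}$. Return $B_n$. Complexity conventions: elements of $\mathbb{F}_{q^m}$ are stored w.r.t. a normal basis of $\mathbb{F}_{q^m}$ over $\mathbb{F}_q$, so $q$-th powers are free; $\mathcal{O}_{q^m}(\cdot)$ counts arithmetic operations in $\mathbb{F}_{q^m}$. *)

theory Defs
  imports "HOL-Computational_Algebra.Primes"
begin

text \<open>Cost model: a q-linearized polynomial sum_i a_i x^[i] is stored as its coefficient
list [a_0, a_1, ...] (the empty list is 0).  Every function below returns its result
together with the number of arithmetic operations in the field performed
(additions, subtractions, negations, multiplications, divisions each cost 1).
Raising to the q-th power costs 0 (normal basis representation); zero tests and
q-degree comparisons are not arithmetic operations and cost 0.\<close>

definition prime_power :: "nat \<Rightarrow> bool" where
  "prime_power q \<longleftrightarrow> (\<exists>p e. prime p \<and> e \<ge> 1 \<and> q = p ^ e)"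

text \<open>g_1..g_n linearly independent over F_q = {x. x^q = x}\<close>
definition lin_indep_Fq :: "nat \<Rightarrow> (nat \<Rightarrow> 'a::field) \<Rightarrow> nat \<Rightarrow> bool" where
  "lin_indep_Fq q g n \<longleftrightarrow>
     (\<forall>c. (\<forall>i\<in>{1..n}. c i ^ q = c i) \<and> (\<Sum>i=1..n. c i * g i) = 0
          \<longrightarrow> (\<forall>i\<in>{1..n}. c i = 0))"

text \<open>q-degree; None stands for -infinity (the zero polynomial)\<close>
definition qdeg :: "'a::zero list \<Rightarrow> int option" where
  "qdeg f = (if \<forall>a\<in>set f. a = 0 then None
             else Some (int (Max {i. i < length f \<and> f ! i \<noteq> 0})))"

definition qdeg_test :: "'a::zero list \<Rightarrow> 'a list \<Rightarrow> nat \<Rightarrow> bool" where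
  "qdeg_test P D k = (case qdeg P of None \<Rightarrow> True
       | Some dp \<Rightarrow> (case qdeg D of None \<Rightarrow> False | Some dd \<Rightarrow> dp \<le> dd + int k - 1))"

text \<open>evaluation f(x) = sum_j a_j x^(q^j)\<close>
fun ev :: "nat \<Rightarrow> 'a::field list \<Rightarrow> 'a \<Rightarrow> 'a \<times> nat" where
  "ev q [] x = (0, 0)"
| "ev q (a # f) x = (let (v, c) = ev q f (x ^ q) in (a * x + v, c + 2))"

fun psub :: "'a::field list \<Rightarrow> 'a list \<Rightarrow> 'a list \<times> nat" where
  "psub [] h = (map uminus h, length h)"
| "psub f [] = (f, 0)"
| "psub (a # f) (b # h) = (let (s, c) = psub f h in ((a - b) # s, c + 1))"

definition smul :: "'a::field \<Rightarrow> 'a list \<Rightarrow> 'a list \<times> nat" where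
  "smul c f = (map (\<lambda>a. c * a) f, length f)"

text \<open>x^q \<circ> f, free\<close>
definition frob :: "nat \<Rightarrow> 'a::field list \<Rightarrow> 'a list" where
  "frob q f = 0 # map (\<lambda>a. a ^ q) f"

text \<open>(x^q - \<gamma> x) \<circ> f\<close>
definition comp_lin :: "nat \<Rightarrow> 'a::field \<Rightarrow> 'a list \<Rightarrow> 'a list \<times> nat" where
  "comp_lin q \<gamma> f = (let (u, c1) = smul \<gamma> f; (w, c2) = psub (frob q f) u in (w, c1 + c2))"

text \<open>(\<Delta> x) \<circ> F - (\<Gamma> x) \<circ> G\<close>
definition lin2 :: "'a::field \<Rightarrow> 'a \<Rightarrow> 'a list \<Rightarrow> 'a list \<Rightarrow> 'a list \<times> nat" where
  "lin2 \<Delta> \<Gamma> F G = (let (u, c1) = smul \<Delta> F; (v, c2) = smul \<Gamma> G; (w, c3) = psub u v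
                     in (w, c1 + c2 + c3))"

text \<open>\<Gamma>^(q-1) = \<Gamma>^q / \<Gamma> (q-th power free, one division)\<close>
definition qpow1 :: "nat \<Rightarrow> 'a::field \<Rightarrow> 'a \<times> nat" where
  "qpow1 q \<Gamma> = (\<Gamma> ^ (q - 1), 1)"

text \<open>A matrix B = [P, -K; N, -D] is stored as (P, K, N, D).  One iteration of Algorithm 3.\<close>
definition alg_step :: "nat \<Rightarrow> nat \<Rightarrow> 'a::field list \<times> 'a list \<times> 'a list \<times> 'a list
    \<Rightarrow> 'a \<Rightarrow> 'a \<Rightarrow> ('a list \<times> 'a list \<times> 'a list \<times> 'a list) \<times> nat" where
  "alg_step q k B gi ri = (case B of (P, K, N, D) \<Rightarrow>
     let (e1, c1) = ev q P gi; (e2, c2) = ev q K ri; \<Gamma> = e1 - e2;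
         (e3, c3) = ev q N gi; (e4, c4) = ev q D ri; \<Delta> = e3 - e4;
         base = c1 + c2 + c3 + c4 + 2
     in if (qdeg_test P D k \<and> \<Gamma> \<noteq> 0) \<or> \<Delta> = 0 then
          (let (\<gamma>, c5) = qpow1 q \<Gamma>; (P', c6) = comp_lin q \<gamma> P; (K', c7) = comp_lin q \<gamma> K;
               (N', c8) = lin2 \<Delta> \<Gamma> P N; (D', c9) = lin2 \<Delta> \<Gamma> K D
           in ((P', K', N', D'), base + c5 + c6 + c7 + c8 + c9))
        else
          (let (P', c5) = lin2 \<Delta> \<Gamma> P N; (K', c6) = lin2 \<Delta> \<Gamma> K D; (\<delta>, c7) = qpow1 q \<Delta>;
               (N', c8) = comp_lin q \<delta> N; (D', c9) = comp_lin q \<delta> D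
           in ((P', K', N', D'), base + c5 + c6 + c7 + c8 + c9)))"

text \<open>Algorithm 3 run for i iterations: returns B_i and the total operation count.
B_0 = [x, 0; 0, x], i.e. P = x, K = 0, N = 0, D = -x.\<close>
fun alg3 :: "nat \<Rightarrow> nat \<Rightarrow> (nat \<Rightarrow> 'a::field) \<Rightarrow> (nat \<Rightarrow> 'a) \<Rightarrow> nat
    \<Rightarrow> ('a list \<times> 'a list \<times> 'a list \<times> 'a list) \<times> nat" where
  "alg3 q k g r 0 = (([1], [], [], [-1]), 0)"
| "alg3 q k g r (Suc i) = (let (B, c) = alg3 q k g r i; (B', c') = alg_step q k B (g (Suc i)) (r (Suc i))
                          in (B', c + c'))"

end

theory Submission
  imports Defs
begin

lemma ev_cost: "snd (ev q f x) = 2 * length f"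
  by (induction f arbitrary: x) (auto simp: split_def Let_def)

lemma psub_len[simp]: "length (fst (psub f h)) = max (length f) (length h)"
  by (induction f h rule: psub.induct) (auto simp: split_def Let_def)

lemma psub_cost[simp]: "snd (psub f h) = length h"
  by (induction f h rule: psub.induct) (auto simp: split_def Let_def)

lemma comp_lin_b[simp]: "length (fst (comp_lin q g f)) = Suc (length f)" "snd (comp_lin q g f) = 2 * length f"
  by (auto simp: comp_lin_def smul_def frob_def split_def Let_def)

lemma lin2_b[simp]: "length (fst (lin2 a b F G)) = max (length F) (length G)" "snd (lin2 a b F G) = length F + 2 * length G"
  by (auto simp: lin2_def smul_def split_def Let_def)

lemma step_b:
  assumes "length P \<le> L" "length K \<le> L" "length N \<le> L" "length D \<le> L"
  shows "(case fst (alg_step q k (P,K,N,D) x y) of (P',K',N',D') \<Rightarrow>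
           length P' \<le> L+1 \<and> length K' \<le> L+1 \<and> length N' \<le> L+1 \<and> length D' \<le> L+1)
         \<and> snd (alg_step q k (P,K,N,D) x y) \<le> 18 * L + 5"
  using assms unfolding alg_step_def qpow1_def
  by (auto simp: split_def Let_def ev_cost)

lemma alg3_b:
  "(case fst (alg3 q k g r i) of (P,K,N,D) \<Rightarrow>
      length P \<le> i+1 \<and> length K \<le> i+1 \<and> length N \<le> i+1 \<and> length D \<le> i+1)
   \<and> snd (alg3 q k g r i) \<le> 9 * i^2 + 14 * i"
proof (induction i)
  case 0
  then show ?case by simp
next
  case (Suc i)
  obtain P K N D c where A: "alg3 q k g r i = ((P,K,N,D), c)" by (metis prod.exhaust)
  from Suc A have h: "length P \<le> i+1" "length K \<le> i+1" "length N \<le> i+1" "length D \<le> i+1" "c \<le> 9 * i^2 + 14 * i"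
    by auto
  note s = step_b[OF h(1-4), of q k "g (Suc i)" "r (Suc i)"]
  show ?case
    using s h(5) A
    by (auto simp: split_def Let_def power2_eq_square algebra_simps)
qed

theorem proposition39:
  fixes q m n k :: nat and g r :: "nat \<Rightarrow> 'a::{finite,field}"
  assumes "prime_power q" and "m \<ge> 1" and "card (UNIV :: 'a set) = q ^ m"
    and "1 \<le> k" and "k \<le> n"
    and "lin_indep_Fq q g n"
  shows "snd (alg3 q k g r n) \<le> 30 * n ^ 2"
proof -
  have "snd (alg3 q k g r n) \<le> 9 * n^2 + 14 * n" using alg3_b by blast
  moreover have "14 * n \<le> 14 * n^2" by (simp add: power2_eq_square)
  ultimately show ?thesis by linarith
qed

end
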